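(* Let $\succ$ be a binary relation on $\mathcal{F}$ satisfying Axioms A1–A7 below. Then for all $f\in\mathcal{F}$ and $x,y,z\in X$, if $f\Join x$, $f\succ y$ and $z\succ f$, then $z\succ x$ and $x\succ y$. Axioms: (A1) $\succ$ is asymmetric and transitive, and its restriction to $X$ is non-trivial and negatively transitive. (A2) For all $f,g,h\in\mathcal{F}$, $\{\alpha\in[0,1]:\alpha f+(1-\alpha)g\succ h\}$ and $\{\alpha\in[0,1]:h\succ\alpha f+(1-\alpha)g\}$ are open in $[0,1]$. (A3) For all $f,g\in\mathcal{F}$, $x\in X$, $\alpha\in(0,1)$: $f\succ g$ iff $\alpha f+(1-\alpha)x\succ\alpha g+(1-\alpha)x$. (A4) For all $x\in X$, $\{f:f\succ x\}$ and $\{f:x\succ f\}$ are convex. (A5) If $f(s)\succ g(s)$ for all $s\in S$ then $f\succ g$. (A6) If for all $x\in X$, $f\Join x$ implies $g\Join x$, then $f\Join g$. (A7) If $f\Join x$, $x\succ g$, $g\Join y$, $f\succ y$ (with $x,y\in X$), then $f\succ g$.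
   Context: $S$ is a set of states with algebra $\Sigma$; $X$ is a non-singleton convex subset of a real vector space; $\mathcal{F}$ is the set of simple acts $f:S\to X$ ($\Sigma$-measurable, finitely many values) with pointwise mixtures; elements of $X$ are identified with constant acts. $f\Join g$ means $f\not\succ g$ and $g\not\succ f$. *)

theory Defs
  imports "HOL-Analysis.Analysis"
begin

text \<open>States: the type 'a (S = UNIV). Sigma: an algebra on S. Outcomes X: subset of real vector space 'b.\<close>

definition simple_acts :: "'a set set \<Rightarrow> 'b set \<Rightarrow> ('a \<Rightarrow> 'b) set" where
  "simple_acts \<Sigma> X = {f. range f \<subseteq> X \<and> finite (range f) \<and> (\<forall>x. f -` {x} \<in> \<Sigma>)}"

definition cst :: "'b \<Rightarrow> ('a \<Rightarrow> 'b)" where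
  "cst x = (\<lambda>_. x)"

definition mix :: "real \<Rightarrow> ('a \<Rightarrow> 'b::real_vector) \<Rightarrow> ('a \<Rightarrow> 'b) \<Rightarrow> ('a \<Rightarrow> 'b)" where
  "mix \<alpha> f g = (\<lambda>s. \<alpha> *\<^sub>R f s + (1 - \<alpha>) *\<^sub>R g s)"

definition unc :: "(('a \<Rightarrow> 'b) \<Rightarrow> ('a \<Rightarrow> 'b) \<Rightarrow> bool) \<Rightarrow> ('a \<Rightarrow> 'b) \<Rightarrow> ('a \<Rightarrow> 'b) \<Rightarrow> bool" where
  "unc P f g \<longleftrightarrow> \<not> P f g \<and> \<not> P g f"

definition A1 where
  "A1 \<Sigma> X P \<longleftrightarrow>
     (\<forall>f\<in>simple_acts \<Sigma> X. \<forall>g\<in>simple_acts \<Sigma> X. P f g \<longrightarrow> \<not> P g f) \<and>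
     (\<forall>f\<in>simple_acts \<Sigma> X. \<forall>g\<in>simple_acts \<Sigma> X. \<forall>h\<in>simple_acts \<Sigma> X.
        P f g \<and> P g h \<longrightarrow> P f h) \<and>
     (\<exists>x\<in>X. \<exists>y\<in>X. P (cst x) (cst y)) \<and>
     (\<forall>x\<in>X. \<forall>y\<in>X. \<forall>z\<in>X. \<not> P (cst x) (cst y) \<and> \<not> P (cst y) (cst z) \<longrightarrow> \<not> P (cst x) (cst z))"

definition A2 where
  "A2 \<Sigma> X P \<longleftrightarrow>
     (\<forall>f\<in>simple_acts \<Sigma> X. \<forall>g\<in>simple_acts \<Sigma> X. \<forall>h\<in>simple_acts \<Sigma> X.
        openin (top_of_set {0..1}) {\<alpha>\<in>{0..1::real}. P (mix \<alpha> f g) h} \<and>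
        openin (top_of_set {0..1}) {\<alpha>\<in>{0..1::real}. P h (mix \<alpha> f g)})"

definition A3 where
  "A3 \<Sigma> X P \<longleftrightarrow>
     (\<forall>f\<in>simple_acts \<Sigma> X. \<forall>g\<in>simple_acts \<Sigma> X. \<forall>x\<in>X. \<forall>\<alpha>\<in>{0<..<1::real}.
        P f g \<longleftrightarrow> P (mix \<alpha> f (cst x)) (mix \<alpha> g (cst x)))"

definition A4 where
  "A4 \<Sigma> X P \<longleftrightarrow>
     (\<forall>x\<in>X. \<forall>f\<in>simple_acts \<Sigma> X. \<forall>g\<in>simple_acts \<Sigma> X. \<forall>\<alpha>\<in>{0..1::real}.
        (P f (cst x) \<and> P g (cst x) \<longrightarrow> P (mix \<alpha> f g) (cst x)) \<and>
        (P (cst x) f \<and> P (cst x) g \<longrightarrow> P (cst x) (mix \<alpha> f g)))"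

definition A5 where
  "A5 \<Sigma> X P \<longleftrightarrow>
     (\<forall>f\<in>simple_acts \<Sigma> X. \<forall>g\<in>simple_acts \<Sigma> X.
        (\<forall>s. P (cst (f s)) (cst (g s))) \<longrightarrow> P f g)"

definition A6 where
  "A6 \<Sigma> X P \<longleftrightarrow>
     (\<forall>f\<in>simple_acts \<Sigma> X. \<forall>g\<in>simple_acts \<Sigma> X.
        (\<forall>x\<in>X. unc P f (cst x) \<longrightarrow> unc P g (cst x)) \<longrightarrow> unc P f g)"

definition A7 where
  "A7 \<Sigma> X P \<longleftrightarrow>
     (\<forall>f\<in>simple_acts \<Sigma> X. \<forall>g\<in>simple_acts \<Sigma> X. \<forall>x\<in>X. \<forall>y\<in>X.
        unc P f (cst x) \<and> P (cst x) g \<and> unc P g (cst y) \<and> P f (cst y) \<longrightarrow> P f g)"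

end

theory Submission
  imports Defs
begin

lemma cst_simple:
  assumes "algebra UNIV \<Sigma>" "x \<in> X"
  shows "cst x \<in> simple_acts \<Sigma> X"
proof -
  interpret algebra UNIV \<Sigma> by (fact assms(1))
  have U: "UNIV \<in> \<Sigma>" "{} \<in> \<Sigma>" using top by auto
  have "cst x -` {v} \<in> \<Sigma>" for v
  proof (cases "v = x")
    case True
    then have "cst x -` {v} = UNIV" by (simp add: cst_def)
    then show ?thesis using U by metis
  next
    case False
    then have "cst x -` {v} = {}" by (simp add: cst_def)
    then show ?thesis using U by metis
  qed
  moreover have R: "range (cst x) = {x}" by (simp add: cst_def)
  ultimately show ?thesis using assms(2) unfolding simple_acts_def mem_Collect_eq R by simp
qed

theorem lemma1:
  fixes \<Sigma> :: "'a set set" and X :: "'b::real_vector set"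
    and P :: "('a \<Rightarrow> 'b) \<Rightarrow> ('a \<Rightarrow> 'b) \<Rightarrow> bool"
  assumes "algebra UNIV \<Sigma>"
    and "convex X" and "\<exists>x\<in>X. \<exists>y\<in>X. x \<noteq> y"
    and "A1 \<Sigma> X P" and "A2 \<Sigma> X P" and "A3 \<Sigma> X P" and "A4 \<Sigma> X P"
    and "A5 \<Sigma> X P" and "A6 \<Sigma> X P" and "A7 \<Sigma> X P"
    and "f \<in> simple_acts \<Sigma> X" and "x \<in> X" and "y \<in> X" and "z \<in> X"
    and "unc P f (cst x)" and "P f (cst y)" and "P (cst z) f"
  shows "P (cst z) (cst x) \<and> P (cst x) (cst y)"
proof -
  note cs = cst_simple[OF assms(1)]
  have asym: "\<And>a b. a \<in> simple_acts \<Sigma> X \<Longrightarrow> b \<in> simple_acts \<Sigma> X \<Longrightarrow> P a b \<Longrightarrow> \<not> P b a"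
    using assms(4) unfolding A1_def by blast
  have trans: "\<And>a b c. a \<in> simple_acts \<Sigma> X \<Longrightarrow> b \<in> simple_acts \<Sigma> X \<Longrightarrow> c \<in> simple_acts \<Sigma> X
     \<Longrightarrow> P a b \<Longrightarrow> P b c \<Longrightarrow> P a c"
    using assms(4) unfolding A1_def by blast
  have nt: "\<And>a b c. a \<in> X \<Longrightarrow> b \<in> X \<Longrightarrow> c \<in> X \<Longrightarrow> P (cst a) (cst c) \<Longrightarrow>
      P (cst a) (cst b) \<or> P (cst b) (cst c)"
    using assms(4) unfolding A1_def by blast
  have a6: "\<And>g h. g \<in> simple_acts \<Sigma> X \<Longrightarrow> h \<in> simple_acts \<Sigma> X \<Longrightarrow>
      (\<forall>w\<in>X. unc P g (cst w) \<longrightarrow> unc P h (cst w)) \<Longrightarrow> unc P g h"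
    using assms(9) unfolding A6_def by blast
  have a7: "\<And>g h a b. g \<in> simple_acts \<Sigma> X \<Longrightarrow> h \<in> simple_acts \<Sigma> X \<Longrightarrow> a \<in> X \<Longrightarrow> b \<in> X \<Longrightarrow>
      unc P g (cst a) \<Longrightarrow> P (cst a) h \<Longrightarrow> unc P h (cst b) \<Longrightarrow> P g (cst b) \<Longrightarrow> P g h"
    using assms(10) unfolding A7_def by blast
  have fx1: "\<not> P f (cst x)" and fx2: "\<not> P (cst x) f" using assms(15) by (auto simp: unc_def)
  have f: "f \<in> simple_acts \<Sigma> X" by fact
  have G1: "P (cst z) (cst x)"
  proof (rule ccontr)
    assume nzx: "\<not> P (cst z) (cst x)"
    have nxz: "\<not> P (cst x) (cst z)"
      using trans[OF cs[OF assms(12)] cs[OF assms(14)] f _ assms(17)] fx2 by blast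
    have "\<not> unc P f (cst z)" using assms(17) by (auto simp: unc_def)
    then obtain w where w: "w \<in> X" "unc P f (cst w)" "\<not> unc P (cst z) (cst w)"
      using a6[OF f cs[OF assms(14)]] by blast
    show False
    proof (cases "P (cst w) (cst z)")
      case True
      then have "P (cst w) f" using trans[OF cs[OF w(1)] cs[OF assms(14)] f _ assms(17)] by blast
      then show False using w(2) by (auto simp: unc_def)
    next
      case False
      then have zw: "P (cst z) (cst w)" using w(3) by (auto simp: unc_def)
      then have xw: "P (cst x) (cst w)" using nt[OF assms(14) assms(12) w(1)] nzx by blast
      have "unc P (cst x) (cst z)" using nzx nxz by (auto simp: unc_def)
      then have "P (cst x) f"
        using a7[OF cs[OF assms(12)] f assms(14) w(1) _ assms(17) w(2) xw] by blast
      then show False using fx2 by blast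
    qed
  qed
  have G2: "P (cst x) (cst y)"
  proof (rule ccontr)
    assume nxy: "\<not> P (cst x) (cst y)"
    have nyx: "\<not> P (cst y) (cst x)"
      using trans[OF f cs[OF assms(13)] cs[OF assms(12)] assms(16)] fx1 by blast
    have "\<not> unc P f (cst y)" using assms(16) by (auto simp: unc_def)
    then obtain w where w: "w \<in> X" "unc P f (cst w)" "\<not> unc P (cst y) (cst w)"
      using a6[OF f cs[OF assms(13)]] by blast
    show False
    proof (cases "P (cst y) (cst w)")
      case True
      then have "P f (cst w)" using trans[OF f cs[OF assms(13)] cs[OF w(1)] assms(16)] by blast
      then show False using w(2) by (auto simp: unc_def)
    next
      case False
      then have wy: "P (cst w) (cst y)" using w(3) by (auto simp: unc_def)
      then have wx: "P (cst w) (cst x)" using nt[OF w(1) assms(12) assms(13)] nxy by blast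
      have "unc P (cst x) (cst y)" using nxy nyx by (auto simp: unc_def)
      then have "P f (cst x)"
        using a7[OF f cs[OF assms(12)] w(1) assms(13) w(2) wx _ assms(16)] by blast
      then show False using fx1 by blast
    qed
  qed
  show ?thesis using G1 G2 by blast
qed

end
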